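(* Let $X$ be a nonempty set and $\rho:X\times X\to[0,\infty)$ satisfy: (I) $\rho(x,y)=0$ iff $x=y$; (II) $\rho(x,y)=\rho(y,x)$; (VI) for every $a\in X$ and $\varepsilon>0$ there exists $\phi(a,\varepsilon)>0$ such that for all $b,c\in X$, if $\rho(a,b)<\phi(a,\varepsilon)$ and $\rho(c,b)<\phi(a,\varepsilon)$ then $\rho(a,c)<\varepsilon$. Then $(X,\rho)$ is metrizable, i.e. there is a metric $d$ on $X$ such that for every sequence $\{x_n\}$ and $x\in X$, $\lim_n\rho(x_n,x)=0$ iff $\lim_n d(x_n,x)=0$.
   Context: Condition (VI) is equivalent to: (coherence) if $\lim_n\rho(a,a_n)=0$ and $\lim_n\rho(a_n,b_n)=0$ then $\lim_n\rho(a,b_n)=0$; and also to Wilson's condition: for each $a\in X$ and $k>0$ there is $r>0$ such that whenever $\rho(a,b)\ge k$ and $c\in X$ is arbitrary, $\rho(a,c)+\rho(b,c)\ge r$. *)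

theory Defs
  imports "HOL-Analysis.Analysis"
begin

definition is_metric_on :: "'a set \<Rightarrow> ('a \<Rightarrow> 'a \<Rightarrow> real) \<Rightarrow> bool" where
  "is_metric_on X d \<longleftrightarrow>
     (\<forall>x\<in>X. \<forall>y\<in>X. d x y \<ge> 0) \<and>
     (\<forall>x\<in>X. \<forall>y\<in>X. d x y = 0 \<longleftrightarrow> x = y) \<and>
     (\<forall>x\<in>X. \<forall>y\<in>X. d x y = d y x) \<and>
     (\<forall>x\<in>X. \<forall>y\<in>X. \<forall>z\<in>X. d x z \<le> d x y + d y z)"

end

theory Submission
  imports Defs
begin

locale semi =
  fixes X :: "'a set" and \<rho> :: "'a \<Rightarrow> 'a \<Rightarrow> real"
  assumes nonneg: "\<And>x y. x \<in> X \<Longrightarrow> y \<in> X \<Longrightarrow> \<rho> x y \<ge> 0"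
    and ident: "\<And>x y. x \<in> X \<Longrightarrow> y \<in> X \<Longrightarrow> \<rho> x y = 0 \<longleftrightarrow> x = y"
    and sym: "\<And>x y. x \<in> X \<Longrightarrow> y \<in> X \<Longrightarrow> \<rho> x y = \<rho> y x"
    and VI: "\<And>a \<epsilon>. a \<in> X \<Longrightarrow> \<epsilon> > 0 \<Longrightarrow> \<exists>\<phi>>0. \<forall>b\<in>X. \<forall>c\<in>X.
               \<rho> a b < \<phi> \<and> \<rho> c b < \<phi> \<longrightarrow> \<rho> a c < \<epsilon>"
begin

definition ball :: "real \<Rightarrow> 'a \<Rightarrow> 'a set" where
  "ball r x = {y \<in> X. \<rho> x y < r}"

definition T :: "'a topology" where
  "T = topology (\<lambda>U. U \<subseteq> X \<and> (\<forall>x\<in>U. \<exists>r>0. ball r x \<subseteq> U))"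

lemma refl0: "x \<in> X \<Longrightarrow> \<rho> x x = 0"
  using ident by blast

lemma istop: "istopology (\<lambda>U. U \<subseteq> X \<and> (\<forall>x\<in>U. \<exists>r>0. ball r x \<subseteq> U))"
  unfolding istopology_def
proof (rule conjI; intro allI impI)
  fix S U assume S: "S \<subseteq> X \<and> (\<forall>x\<in>S. \<exists>r>0. ball r x \<subseteq> S)"
    and U: "U \<subseteq> X \<and> (\<forall>x\<in>U. \<exists>r>0. ball r x \<subseteq> U)"
  show "S \<inter> U \<subseteq> X \<and> (\<forall>x\<in>S \<inter> U. \<exists>r>0. ball r x \<subseteq> S \<inter> U)"
  proof (intro conjI ballI)
    show "S \<inter> U \<subseteq> X" using S by blast
    fix x assume "x \<in> S \<inter> U"
    then obtain r1 r2 where "r1 > 0" "ball r1 x \<subseteq> S" "r2 > 0" "ball r2 x \<subseteq> U"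
      using S U by blast
    then show "\<exists>r>0. ball r x \<subseteq> S \<inter> U"
      by (intro exI[of _ "min r1 r2"]) (auto simp: ball_def)
  qed
next
  fix K assume K: "\<forall>S\<in>K. S \<subseteq> X \<and> (\<forall>x\<in>S. \<exists>r>0. ball r x \<subseteq> S)"
  show "\<Union>K \<subseteq> X \<and> (\<forall>x\<in>\<Union>K. \<exists>r>0. ball r x \<subseteq> \<Union>K)"
  proof (intro conjI ballI)
    show "\<Union>K \<subseteq> X" using K by blast
    fix x assume "x \<in> \<Union>K"
    then obtain S where "S \<in> K" "x \<in> S" by blast
    with K obtain r where "r > 0" "ball r x \<subseteq> S" by blast
    with \<open>S \<in> K\<close> show "\<exists>r>0. ball r x \<subseteq> \<Union>K" by blast
  qed
qed

lemma openin_T: "openin T U \<longleftrightarrow> U \<subseteq> X \<and> (\<forall>x\<in>U. \<exists>r>0. ball r x \<subseteq> U)"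
  unfolding T_def using istop by simp

lemma topspace_T [simp]: "topspace T = X"
proof -
  have "openin T X" unfolding openin_T by (auto simp: ball_def intro: exI[of _ 1])
  then show ?thesis
    using openin_T openin_subset by (metis openin_topspace subset_antisym)
qed

lemma two_step:
  assumes "x \<in> X" "\<epsilon> > 0"
  shows "\<exists>r>0. r \<le> \<epsilon> \<and> (\<forall>b\<in>X. \<forall>c\<in>X. \<rho> x b < r \<longrightarrow> \<rho> b c < r \<longrightarrow> \<rho> x c < \<epsilon>)"
proof -
  obtain \<phi> where "\<phi> > 0" and \<phi>: "\<forall>b\<in>X. \<forall>c\<in>X. \<rho> x b < \<phi> \<and> \<rho> c b < \<phi> \<longrightarrow> \<rho> x c < \<epsilon>"
    using VI assms by blast
  show ?thesis
    apply (rule exI[of _ "min \<phi> \<epsilon>"])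
    using \<phi> \<open>\<phi> > 0\<close> assms sym by auto
qed

lemma chain4:
  assumes "x \<in> X" "\<delta> > 0"
  shows "\<exists>r>0. \<forall>y1\<in>X. \<forall>y2\<in>X. \<forall>y3\<in>X. \<forall>y4\<in>X. \<rho> x y1 < r \<longrightarrow> \<rho> y1 y2 < r \<longrightarrow>
           \<rho> y2 y3 < r \<longrightarrow> \<rho> y3 y4 < r \<longrightarrow> \<rho> x y4 < \<delta>"
proof -
  obtain r3 where r3: "r3 > 0" "r3 \<le> \<delta>" "\<forall>b\<in>X. \<forall>c\<in>X. \<rho> x b < r3 \<longrightarrow> \<rho> b c < r3 \<longrightarrow> \<rho> x c < \<delta>"
    using two_step assms by blast
  obtain r2 where r2: "r2 > 0" "r2 \<le> r3" "\<forall>b\<in>X. \<forall>c\<in>X. \<rho> x b < r2 \<longrightarrow> \<rho> b c < r2 \<longrightarrow> \<rho> x c < r3"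
    using two_step assms r3 by blast
  obtain r1 where r1: "r1 > 0" "r1 \<le> r2" "\<forall>b\<in>X. \<forall>c\<in>X. \<rho> x b < r1 \<longrightarrow> \<rho> b c < r1 \<longrightarrow> \<rho> x c < r2"
    using two_step assms r2 by blast
  show ?thesis
  proof (intro exI[of _ r1] conjI ballI impI)
    fix y1 y2 y3 y4 assume y: "y1 \<in> X" "y2 \<in> X" "y3 \<in> X" "y4 \<in> X"
      and h: "\<rho> x y1 < r1" "\<rho> y1 y2 < r1" "\<rho> y2 y3 < r1" "\<rho> y3 y4 < r1"
    have a: "\<rho> x y2 < r2" using r1(3) y h by blast
    have "\<rho> y2 y3 < r2" using h r1 by linarith
    then have b: "\<rho> x y3 < r3" using r2(3) y a by blast
    have "\<rho> y3 y4 < r3" using h r1 r2 by linarith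
    then show "\<rho> x y4 < \<delta>" using r3(3) y b by blast
  qed (use r1 in auto)
qed

lemma nbhd:
  assumes "x \<in> X" "r > 0"
  shows "\<exists>Nb. openin T Nb \<and> x \<in> Nb \<and> Nb \<subseteq> ball r x"
proof -
  define C where "C = {z \<in> X. \<forall>\<delta>>0. \<exists>y\<in>X. \<rho> x y \<ge> r \<and> \<rho> z y < \<delta>}"
  have "openin T (X - C)"
    unfolding openin_T
  proof (intro conjI ballI)
    fix z assume z: "z \<in> X - C"
    then obtain \<delta> where "\<delta> > 0" and \<delta>: "\<forall>y\<in>X. \<rho> x y \<ge> r \<longrightarrow> \<rho> z y \<ge> \<delta>"
      unfolding C_def by (auto simp: not_less)
    obtain \<phi> where "\<phi> > 0" and \<phi>: "\<forall>b\<in>X. \<forall>c\<in>X. \<rho> z b < \<phi> \<and> \<rho> c b < \<phi> \<longrightarrow> \<rho> z c < \<delta>"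
      using VI z \<open>\<delta> > 0\<close> by blast
    have "ball \<phi> z \<subseteq> X - C"
    proof
      fix w assume w: "w \<in> ball \<phi> z"
      show "w \<in> X - C"
      proof
        show "w \<in> X" using w by (simp add: ball_def)
        show "w \<notin> C"
        proof
          assume "w \<in> C"
          then obtain y where y: "y \<in> X" "\<rho> x y \<ge> r" "\<rho> w y < \<phi>"
            unfolding C_def using \<open>\<phi> > 0\<close> by blast
          then have "\<rho> z y < \<delta>" using \<phi> w sym[of w y] by (auto simp: ball_def)
          with \<delta> y show False by force
        qed
      qed
    qed
    then show "\<exists>r>0. ball r z \<subseteq> X - C" using \<open>\<phi> > 0\<close> by blast
  qed auto
  moreover have "x \<in> X - C"
    using assms unfolding C_def by (auto intro!: exI[of _ r])
  moreover have "X - C \<subseteq> ball r x"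
  proof
    fix z assume z: "z \<in> X - C"
    show "z \<in> ball r x"
    proof (rule ccontr)
      assume "z \<notin> ball r x"
      then have "\<rho> x z \<ge> r" using z by (auto simp: ball_def)
      then have "z \<in> C" using z refl0[of z] unfolding C_def by auto
      with z show False by blast
    qed
  qed
  ultimately show ?thesis by blast
qed

lemma open_ball_sub:
  assumes "openin T U" "x \<in> U"
  obtains r where "r > 0" "ball r x \<subseteq> U"
  using assms openin_T by blast


lemma limitin_T:
  assumes "x \<in> X" "\<And>n. s n \<in> X" "(\<lambda>n. \<rho> (s n) x) \<longlonglongrightarrow> 0"
  shows "limitin T s x sequentially"
  unfolding limitin_def
proof (intro conjI allI impI)
  show "x \<in> topspace T" using assms by simp
  fix U assume "openin T U \<and> x \<in> U"
  then obtain r where "r > 0" "ball r x \<subseteq> U" by (meson open_ball_sub)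
  from assms(3) \<open>r > 0\<close> have "eventually (\<lambda>n. \<rho> (s n) x < r) sequentially"
    using order_tendstoD(2) by blast
  then show "eventually (\<lambda>n. s n \<in> U) sequentially"
    by eventually_elim (use assms \<open>ball r x \<subseteq> U\<close> sym in \<open>auto simp: ball_def\<close>)
qed

lemma regular_T: "regular_space T"
  unfolding regular_space
proof (intro allI impI)
  fix C a assume H: "closedin T C \<and> a \<in> topspace T - C"
  then have U: "openin T (X - C)" "a \<in> X - C"
    by (auto simp: closedin_def)
  then obtain r where "r > 0" "ball r a \<subseteq> X - C" by (meson open_ball_sub)
  obtain \<delta> where "\<delta> > 0" and \<delta>: "\<forall>b\<in>X. \<forall>c\<in>X. \<rho> a b < \<delta> \<longrightarrow> \<rho> b c < \<delta> \<longrightarrow> \<rho> a c < r"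
    using two_step U \<open>r > 0\<close> by blast
  obtain Nb where Nb: "openin T Nb" "a \<in> Nb" "Nb \<subseteq> ball \<delta> a"
    using nbhd U \<open>\<delta> > 0\<close> by blast
  have "T closure_of Nb \<subseteq> X - C"
  proof
    fix z assume z: "z \<in> T closure_of Nb"
    then have zX: "z \<in> X" using closure_of_subset_topspace[of T Nb] by auto
    obtain Nb' where Nb': "openin T Nb'" "z \<in> Nb'" "Nb' \<subseteq> ball \<delta> z"
      using nbhd zX \<open>\<delta> > 0\<close> by blast
    then obtain b where "b \<in> Nb" "b \<in> Nb'" using z unfolding in_closure_of by blast
    then have "b \<in> X" "\<rho> a b < \<delta>" "\<rho> z b < \<delta>" using Nb Nb' by (auto simp: ball_def)
    then have "\<rho> a z < r" using \<delta> zX sym[of z b] by auto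
    then show "z \<in> X - C" using \<open>ball r a \<subseteq> X - C\<close> zX by (auto simp: ball_def)
  qed
  then show "\<exists>U. openin T U \<and> a \<in> U \<and> disjnt C (T closure_of U)"
    using Nb by (auto simp: disjnt_def)
qed

end

context semi
begin

definition Ob :: "real \<Rightarrow> 'a \<Rightarrow> 'a set" where
  "Ob r x = (SOME N. openin T N \<and> x \<in> N \<and> N \<subseteq> ball r x)"

lemma Ob: assumes "x \<in> X" "r > 0"
  shows "openin T (Ob r x)" "x \<in> Ob r x" "Ob r x \<subseteq> ball r x"
proof -
  have "openin T (Ob r x) \<and> x \<in> Ob r x \<and> Ob r x \<subseteq> ball r x"
    unfolding Ob_def by (rule someI_ex) (rule nbhd[OF assms])
  then show "openin T (Ob r x)" "x \<in> Ob r x" "Ob r x \<subseteq> ball r x" by auto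
qed

definition wor :: "'a rel" where
  "wor = (SOME r. Well_order r \<and> Field r = UNIV)"

lemma wor: "Well_order wor" "Field wor = UNIV"
proof -
  have "Well_order wor \<and> Field wor = UNIV"
    unfolding wor_def by (rule someI_ex) (rule well_ordering)
  then show "Well_order wor" "Field wor = UNIV" by auto
qed

lemma wo_wor: "wo_rel wor"
  using wor(1) by (simp add: wo_rel_def)

definition U :: "nat \<Rightarrow> 'a \<Rightarrow> 'a set" where
  "U k s = Ob (1 / real (Suc k)) s"

lemma U: assumes "s \<in> X"
  shows "openin T (U k s)" "s \<in> U k s" "U k s \<subseteq> ball (1 / real (Suc k)) s"
  using Ob[OF assms, of "1 / real (Suc k)"] by (auto simp: U_def)

definition A :: "nat \<Rightarrow> 'a \<Rightarrow> 'a" where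
  "A k c = wo_rel.minim wor {s. s \<in> X \<and> c \<in> U k s}"

lemma A: assumes "c \<in> X"
  shows "A k c \<in> X" "c \<in> U k (A k c)" "\<And>s. s \<in> X \<Longrightarrow> c \<in> U k s \<Longrightarrow> (A k c, s) \<in> wor"
proof -
  have ne: "{s. s \<in> X \<and> c \<in> U k s} \<noteq> {}" using U(2)[OF assms] assms by blast
  have "A k c \<in> {s. s \<in> X \<and> c \<in> U k s}"
    unfolding A_def using wo_rel.minim_in[OF wo_wor _ ne] wor(2) by auto
  then show "A k c \<in> X" "c \<in> U k (A k c)" by auto
  show "\<And>s. s \<in> X \<Longrightarrow> c \<in> U k s \<Longrightarrow> (A k c, s) \<in> wor"
    unfolding A_def using wo_rel.minim_least[OF wo_wor] wor(2) by auto
qed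

lemma A_eq:
  assumes "c \<in> X" "c' \<in> X" "c' \<in> U k (A k c)" "c \<in> U k (A k c')"
  shows "A k c = A k c'"
proof -
  have "(A k c', A k c) \<in> wor" using A(3)[OF assms(2) A(1)[OF assms(1)] assms(3)] .
  moreover have "(A k c, A k c') \<in> wor" using A(3)[OF assms(1) A(1)[OF assms(2)] assms(4)] .
  ultimately show ?thesis using wo_rel.ANTISYM[OF wo_wor] unfolding antisym_def by blast
qed

definition ch :: "'a \<Rightarrow> real \<Rightarrow> 'a set \<Rightarrow> bool" where
  "ch c r W \<longleftrightarrow> (\<forall>y1\<in>X. \<forall>y2\<in>X. \<forall>y3\<in>X. \<forall>y4\<in>X. \<rho> c y1 < r \<longrightarrow> \<rho> y1 y2 < r \<longrightarrow>
                  \<rho> y2 y3 < r \<longrightarrow> \<rho> y3 y4 < r \<longrightarrow> y4 \<in> W)"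

definition V :: "nat \<Rightarrow> nat \<Rightarrow> 'a \<Rightarrow> 'a set" where
  "V k n s = \<Union>{Ob ((1/2)^n) c | c. c \<in> X \<and> A k c = s \<and> ch c ((1/2)^n) (U k s)}"

lemma V_memI:
  assumes "c \<in> X" "A k c = s" "ch c ((1/2)^n) (U k s)" "y \<in> Ob ((1/2)^n) c"
  shows "y \<in> V k n s"
  unfolding V_def by (rule UnionI[of "Ob ((1/2)^n) c"]) (use assms in auto)

lemma V_open: "openin T (V k n s)"
  unfolding V_def by (rule openin_Union) (auto intro: Ob)

lemma V_subX: "V k n s \<subseteq> X"
  using openin_subset[OF V_open] by simp

lemma V_sub: assumes "s \<in> X" shows "V k n s \<subseteq> U k s"
proof
  fix y assume "y \<in> V k n s"
  then obtain c where c: "c \<in> X" "A k c = s" "ch c ((1/2)^n) (U k s)" "y \<in> Ob ((1/2)^n) c"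
    unfolding V_def by blast
  then have y: "y \<in> X" "\<rho> c y < (1/2)^n" using Ob(3)[OF c(1), of "(1/2)^n"] by (auto simp: ball_def)
  have "\<rho> y y = 0" using refl0 y by blast
  then have "\<rho> y y < (1/2)^n" by simp
  then show "y \<in> U k s" using c(3)[unfolded ch_def, rule_format, OF y(1) y(1) y(1) y(1) y(2)] by blast
qed

lemma finite_allsame: "(\<forall>a\<in>S. \<forall>b\<in>S. a = b) \<Longrightarrow> finite S"
proof (cases "S = {}")
  case False
  then obtain a where "a \<in> S" by blast
  moreover assume "\<forall>a\<in>S. \<forall>b\<in>S. a = b"
  ultimately have "S \<subseteq> {a}" by blast
  then show ?thesis using finite_subset by blast
qed simp

lemma V_lf: "locally_finite_in T ((V k n) ` X)"
  unfolding locally_finite_in_def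
proof (intro conjI ballI)
  show "\<Union> (V k n ` X) \<subseteq> topspace T" using V_subX by auto
  fix x assume x: "x \<in> topspace T"
  then have xX: "x \<in> X" by simp
  define r :: real where "r = (1/2)^n"
  have rpos: "r > 0" unfolding r_def by simp
  define Nb where "Nb = Ob r x"
  have Nb: "openin T Nb" "x \<in> Nb" "Nb \<subseteq> ball r x" using Ob[OF xX rpos] Nb_def by auto
  have "finite {W \<in> V k n ` X. W \<inter> Nb \<noteq> {}}"
  proof (rule finite_allsame, intro ballI)
    fix W1 W2 assume W1: "W1 \<in> {W \<in> V k n ` X. W \<inter> Nb \<noteq> {}}" and W2: "W2 \<in> {W \<in> V k n ` X. W \<inter> Nb \<noteq> {}}"
    from W1 have "W1 \<in> V k n ` X" "W1 \<inter> Nb \<noteq> {}" by simp_all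
    then obtain s where st1: "s \<in> X" "W1 = V k n s" by blast
    from W2 have "W2 \<in> V k n ` X" "W2 \<inter> Nb \<noteq> {}" by simp_all
    then obtain t where st2: "t \<in> X" "W2 = V k n t" by blast
    from \<open>W1 \<inter> Nb \<noteq> {}\<close> st1 obtain y where y: "y \<in> V k n s" "y \<in> Nb" by blast
    from \<open>W2 \<inter> Nb \<noteq> {}\<close> st2 obtain y' where y': "y' \<in> V k n t" "y' \<in> Nb" by blast
    have st: "s \<in> X" "t \<in> X" "W1 = V k n s" "W2 = V k n t" using st1 st2 by simp_all
    from y(1) obtain c where c: "c \<in> X" "A k c = s" "ch c r (U k s)" "y \<in> Ob r c"
      unfolding V_def r_def by blast
    from y'(1) obtain c' where c': "c' \<in> X" "A k c' = t" "ch c' r (U k t)" "y' \<in> Ob r c'"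
      unfolding V_def r_def by blast
    have yy: "y \<in> X" "\<rho> c y < r" using Ob(3)[OF c(1) rpos] c(4) by (auto simp: ball_def)
    have yy': "y' \<in> X" "\<rho> c' y' < r" using Ob(3)[OF c'(1) rpos] c'(4) by (auto simp: ball_def)
    have xy: "\<rho> x y < r" "\<rho> x y' < r" using Nb(3) y(2) y'(2) by (auto simp: ball_def)
    have e1: "\<rho> y x < r" using xy(1) sym[of x y] xX yy(1) by simp
    have e2: "\<rho> y' c' < r" using yy'(2) sym[of c' y'] c'(1) yy'(1) by simp
    have e3: "\<rho> y' x < r" using xy(2) sym[of x y'] xX yy'(1) by simp
    have e4: "\<rho> y c < r" using yy(2) sym[of c y] c(1) yy(1) by simp
    have "c' \<in> U k s"
      using c(3)[unfolded ch_def, rule_format, OF yy(1) xX yy'(1) c'(1) yy(2) e1 xy(2) e2] .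
    moreover have "c \<in> U k t"
      using c'(3)[unfolded ch_def, rule_format, OF yy'(1) xX yy(1) c(1) yy'(2) e3 xy(1) e4] .
    ultimately have "A k c = A k c'"
      by (intro A_eq[OF c(1) c'(1)]) (use c(2) c'(2) in simp_all)
    then have "s = t" using c(2) c'(2) by metis
    then show "W1 = W2" using st by metis
  qed
  then show "\<exists>N0. openin T N0 \<and> x \<in> N0 \<and> finite {W \<in> V k n ` X. W \<inter> N0 \<noteq> {}}"
    using Nb(1,2) by (intro exI[of _ Nb] conjI)
qed

lemma V_cover:
  assumes "x \<in> X"
  shows "\<exists>n. x \<in> V k n (A k x)"
proof -
  define s where "s = A k x"
  have s: "s \<in> X" "x \<in> U k s" using A[OF assms] s_def by auto
  obtain \<delta> where "\<delta> > 0" and \<delta>: "ball \<delta> x \<subseteq> U k s"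
    using open_ball_sub[OF U(1)[OF s(1)] s(2)] by blast
  obtain r0 where "r0 > 0" and r0: "\<forall>y1\<in>X. \<forall>y2\<in>X. \<forall>y3\<in>X. \<forall>y4\<in>X. \<rho> x y1 < r0 \<longrightarrow> \<rho> y1 y2 < r0 \<longrightarrow>
           \<rho> y2 y3 < r0 \<longrightarrow> \<rho> y3 y4 < r0 \<longrightarrow> \<rho> x y4 < \<delta>"
    using chain4[OF assms \<open>\<delta> > 0\<close>] by blast
  have "\<exists>n. (1/2::real)^n < r0" by (rule real_arch_pow_inv[OF \<open>r0 > 0\<close>]) simp
  then obtain n where n: "(1/2::real)^n < r0" ..
  have "ch x ((1/2)^n) (U k s)"
    unfolding ch_def
  proof (intro ballI impI)
    fix y1 y2 y3 y4 assume "y1 \<in> X" "y2 \<in> X" "y3 \<in> X" "y4 \<in> X"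
      "\<rho> x y1 < (1/2)^n" "\<rho> y1 y2 < (1/2)^n" "\<rho> y2 y3 < (1/2)^n" "\<rho> y3 y4 < (1/2)^n"
    note hh = this
    have "\<rho> x y1 < r0" "\<rho> y1 y2 < r0" "\<rho> y2 y3 < r0" "\<rho> y3 y4 < r0"
      using less_trans[OF hh(5) n] less_trans[OF hh(6) n] less_trans[OF hh(7) n] less_trans[OF hh(8) n]
      by simp_all
    then have "\<rho> x y4 < \<delta>" using r0[rule_format, OF hh(1-4)] by blast
    then show "y4 \<in> U k s" using \<delta> \<open>y4 \<in> X\<close> by (auto simp: ball_def)
  qed
  moreover have "x \<in> Ob ((1/2)^n) x" using Ob(2)[OF assms] by simp
  ultimately have "x \<in> V k n s" using V_memI[OF assms s_def[symmetric]] by blast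
  then show ?thesis unfolding s_def by blast
qed

lemma V_base:
  assumes "openin T W" "x \<in> W"
  shows "\<exists>k n. x \<in> V k n (A k x) \<and> V k n (A k x) \<subseteq> W"
proof -
  have xX: "x \<in> X" using assms openin_subset[OF assms(1)] by auto
  obtain r where "r > 0" and r: "ball r x \<subseteq> W" using open_ball_sub[OF assms] by blast
  obtain \<phi> where "\<phi> > 0" and \<phi>: "\<forall>b\<in>X. \<forall>c\<in>X. \<rho> x b < \<phi> \<and> \<rho> c b < \<phi> \<longrightarrow> \<rho> x c < r"
    using VI[OF xX \<open>r > 0\<close>] by blast
  obtain k where k: "inverse (real (Suc k)) < \<phi>" using reals_Archimedean[OF \<open>\<phi> > 0\<close>] by blast
  obtain n where n: "x \<in> V k n (A k x)" using V_cover[OF xX] by blast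
  define s where "s = A k x"
  have sX: "s \<in> X" using A(1)[OF xX] s_def by simp
  have "V k n s \<subseteq> W"
  proof
    fix y assume y: "y \<in> V k n s"
    have yX: "y \<in> X" using y V_subX by blast
    have kk: "1 / real (Suc k) < \<phi>" using k by (simp add: inverse_eq_divide)
    have "y \<in> ball (1 / real (Suc k)) s" using y V_sub[OF sX] U(3)[OF sX, of k] by blast
    then have "\<rho> s y < \<phi>" using kk by (simp add: ball_def)
    moreover have "x \<in> ball (1 / real (Suc k)) s" using n s_def V_sub[OF sX] U(3)[OF sX, of k] by blast
    then have "\<rho> s x < \<phi>" using kk by (simp add: ball_def)
    ultimately have "\<rho> x s < \<phi>" "\<rho> y s < \<phi>" using sX yX xX sym[of s y] sym[of s x] by simp_all
    then have "\<rho> x y < r" using \<phi>[rule_format, OF sX yX] by blast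
    then show "y \<in> W" using r yX by (auto simp: ball_def)
  qed
  then have "V k n (A k x) \<subseteq> W" by (simp add: s_def)
  with n show ?thesis by blast
qed

end

context semi
begin

definition Fam :: "nat \<Rightarrow> 'a set set" where
  "Fam j = V (fst (prod_decode j)) (snd (prod_decode j)) ` X"

lemma Fam_lf: "locally_finite_in T (Fam j)"
  unfolding Fam_def by (rule V_lf)

lemma Fam_open: "W \<in> Fam j \<Longrightarrow> openin T W"
  unfolding Fam_def using V_open by blast

lemma Fam_base:
  assumes "openin T W" "x \<in> W"
  shows "\<exists>j B. B \<in> Fam j \<and> x \<in> B \<and> B \<subseteq> W"
proof -
  obtain k n where kn: "x \<in> V k n (A k x)" "V k n (A k x) \<subseteq> W"
    using V_base[OF assms] by blast
  have xX: "x \<in> X" using assms openin_subset[OF assms(1)] by auto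
  have "V k n (A k x) \<in> Fam (prod_encode (k, n))"
    unfolding Fam_def using A(1)[OF xX] by simp
  then show ?thesis using kn by blast
qed

lemma closed_union_closures:
  assumes "\<F> \<subseteq> Fam j"
  shows "closedin T (\<Union>((\<lambda>W. T closure_of W) ` \<F>))"
proof (rule closedin_locally_finite_Union)
  show "locally_finite_in T ((\<lambda>W. T closure_of W) ` \<F>)"
    by (rule locally_finite_in_closure[OF locally_finite_in_subset[OF Fam_lf assms]])
qed auto

lemma sigma_cover:
  assumes "closedin T S" "closedin T C" "disjnt S C"
  obtains h :: "nat \<Rightarrow> 'a set" where
    "\<And>n. openin T (h n)" "\<And>n. disjnt C (T closure_of (h n))" and "S \<subseteq> \<Union>(range h)"
proof -
  define \<F> where "\<F> n = {W \<in> Fam n. disjnt C (T closure_of W)}" for n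
  define h where "h n = \<Union>(\<F> n)" for n
  have "openin T (h n)" for n
    unfolding h_def \<F>_def by (rule openin_Union) (auto intro: Fam_open)
  moreover have "disjnt C (T closure_of (h n))" for n
  proof -
    have sub: "\<F> n \<subseteq> Fam n" unfolding \<F>_def by blast
    have "h n \<subseteq> \<Union>((\<lambda>W. T closure_of W) ` \<F> n)"
    proof
      fix y assume "y \<in> h n"
      then obtain W where "W \<in> \<F> n" "y \<in> W" unfolding h_def by blast
      moreover have "W \<subseteq> topspace T" using Fam_open[of W n] \<open>W \<in> \<F> n\<close> sub openin_subset by blast
      ultimately show "y \<in> \<Union>((\<lambda>W. T closure_of W) ` \<F> n)"
        using closure_of_subset[of W T] by blast
    qed
    then have "T closure_of (h n) \<subseteq> \<Union>((\<lambda>W. T closure_of W) ` \<F> n)"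
      by (rule closure_of_minimal[OF _ closed_union_closures[OF sub]])
    moreover have "disjnt C (\<Union>((\<lambda>W. T closure_of W) ` \<F> n))"
      unfolding \<F>_def disjnt_def by blast
    ultimately show ?thesis by (meson disjnt_subset2)
  qed
  moreover have "S \<subseteq> \<Union>(range h)"
  proof
    fix x assume "x \<in> S"
    then have "x \<in> topspace T - C" using assms closedin_subset[OF assms(1)] by (auto simp: disjnt_def)
    then obtain U where U: "openin T U" "x \<in> U" "disjnt C (T closure_of U)"
      using regular_T assms(2) unfolding regular_space by blast
    obtain j B where B: "B \<in> Fam j" "x \<in> B" "B \<subseteq> U" using Fam_base[OF U(1,2)] by blast
    have "T closure_of B \<subseteq> T closure_of U" using closure_of_mono[OF B(3)] .
    then have "disjnt C (T closure_of B)" using U(3) by (meson disjnt_subset2)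
    then have "B \<in> \<F> j" using B(1) unfolding \<F>_def by blast
    then show "x \<in> \<Union>(range h)" using B(2) unfolding h_def by blast
  qed
  ultimately show ?thesis using that by blast
qed

lemma normal_T: "normal_space T"
  unfolding normal_space_def
proof clarify
  fix S C
  assume clo: "closedin T S" "closedin T C" and "disjnt S C"
  obtain h :: "nat \<Rightarrow> 'a set" where
    opeh: "\<And>n. openin T (h n)" and dish: "\<And>n. disjnt C (T closure_of (h n))"
    and Sh: "S \<subseteq> \<Union>(range h)"
    using sigma_cover[OF clo \<open>disjnt S C\<close>] by metis
  obtain k :: "nat \<Rightarrow> 'a set" where
    opek: "\<And>n. openin T (k n)" and disk: "\<And>n. disjnt S (T closure_of (k n))"
    and Ck: "C \<subseteq> \<Union>(range k)"
    using sigma_cover[OF clo(2,1)] \<open>disjnt S C\<close> disjnt_sym by metis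
  define U where "U \<equiv> \<Union>i. h i - (\<Union>j<i. T closure_of k j)"
  define V' where "V' \<equiv> \<Union>i. k i - (\<Union>j\<le>i. T closure_of h j)"
  show "\<exists>U V. openin T U \<and> openin T V \<and> S \<subseteq> U \<and> C \<subseteq> V \<and> disjnt U V"
  proof (intro exI conjI)
    show "openin T U" "openin T V'"
      unfolding U_def V'_def
      by (force intro!: opek opeh closedin_Union closedin_closure_of)+
    show "S \<subseteq> U" "C \<subseteq> V'"
      using Sh Ck dish disk by (fastforce simp: U_def V'_def disjnt_iff)+
    have "\<And>x i j. \<lbrakk>x \<in> k i; x \<in> h j; \<forall>j\<le>i. x \<notin> T closure_of h j\<rbrakk>
                 \<Longrightarrow> \<exists>i<j. x \<in> T closure_of k i"
      by (metis in_closure_of linorder_not_less opek openin_subset subsetD)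
    then show "disjnt U V'"
      by (force simp: U_def V'_def disjnt_iff)
  qed
qed

end

context semi
begin

definition Fcl :: "nat \<Rightarrow> 'a set \<Rightarrow> 'a set" where
  "Fcl m W = \<Union>((\<lambda>W'. T closure_of W') ` {W' \<in> Fam m. T closure_of W' \<subseteq> W})"

lemma Fcl_closed: "closedin T (Fcl m W)"
  unfolding Fcl_def by (rule closed_union_closures) blast

lemma Fcl_sub: "Fcl m W \<subseteq> W"
  unfolding Fcl_def by blast

definition G :: "nat \<Rightarrow> 'a set \<Rightarrow> 'a \<Rightarrow> real" where
  "G m W = (SOME g. continuous_map T (top_of_set {0..1}) g \<and> g ` (X - W) \<subseteq> {0} \<and> g ` (Fcl m W) \<subseteq> {1})"

lemma G:
  assumes "openin T W"
  shows "continuous_map T (top_of_set {0..1}) (G m W)" "\<And>y. y \<in> X - W \<Longrightarrow> G m W y = 0"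
    "\<And>y. y \<in> Fcl m W \<Longrightarrow> G m W y = 1"
proof -
  have c1: "closedin T (X - W)"
    using closedin_diff[OF closedin_topspace assms] by simp
  have d: "disjnt (X - W) (Fcl m W)" unfolding disjnt_def using Fcl_sub[of m W] by blast
  obtain f where "continuous_map T (top_of_set {0..1}) f" "f ` (X - W) \<subseteq> {0}" "f ` (Fcl m W) \<subseteq> {1::real}"
    by (rule Urysohn_lemma[OF normal_T c1 Fcl_closed d, of "0::real" 1]) auto
  define P where "P = (\<lambda>g. continuous_map T (top_of_set {0..1}) g \<and> g ` (X - W) \<subseteq> {0} \<and> g ` (Fcl m W) \<subseteq> {1::real})"
  have ex: "\<exists>g. P g" unfolding P_def using \<open>continuous_map T (top_of_set {0..1}) f\<close> \<open>f ` (X - W) \<subseteq> {0}\<close> \<open>f ` (Fcl m W) \<subseteq> {1}\<close>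
    by blast
  have GP: "G m W = (SOME g. P g)" unfolding G_def P_def ..
  have "P (SOME g. P g)" using ex by (rule someI_ex)
  then have H: "continuous_map T (top_of_set {0..1}) (G m W) \<and> G m W ` (X - W) \<subseteq> {0} \<and> G m W ` (Fcl m W) \<subseteq> {1}"
    by (simp only: GP P_def)
  then show "continuous_map T (top_of_set {0..1}) (G m W)" by simp
  show "\<And>y. y \<in> X - W \<Longrightarrow> G m W y = 0" using H by blast
  show "\<And>y. y \<in> Fcl m W \<Longrightarrow> G m W y = 1" using H by blast
qed

lemma G_range:
  assumes "openin T W" "y \<in> X"
  shows "0 \<le> G m W y" "G m W y \<le> 1"
proof -
  have "G m W y \<in> topspace (top_of_set {0..1::real})"
    using G(1)[OF assms(1), of m] assms(2) unfolding continuous_map by auto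
  then show "0 \<le> G m W y" "G m W y \<le> 1" by auto
qed

lemma G_cont: "openin T W \<Longrightarrow> continuous_map T euclideanreal (G m W)"
  using G(1) continuous_map_in_subtopology by blast

lemma G_lim:
  assumes "openin T W" "x \<in> X" "\<And>n. s n \<in> X" "(\<lambda>n. \<rho> (s n) x) \<longlonglongrightarrow> 0"
  shows "(\<lambda>n. G m W (s n)) \<longlonglongrightarrow> G m W x"
proof -
  have "limitin euclideanreal (G m W \<circ> s) (G m W x) sequentially"
    by (rule continuous_map_limit[OF G_cont[OF assms(1)] limitin_T[OF assms(2-4)]])
  then show ?thesis by (simp add: o_def)
qed

definition dd :: "nat \<Rightarrow> nat \<Rightarrow> 'a \<Rightarrow> 'a \<Rightarrow> real" where
  "dd j m x y = Sup (insert 0 ((\<lambda>W. \<bar>G m W x - G m W y\<bar>) ` Fam j))"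

lemma dd_bdd:
  assumes "x \<in> X" "y \<in> X"
  shows "bdd_above (insert 0 ((\<lambda>W. \<bar>G m W x - G m W y\<bar>) ` Fam j))"
proof (rule bdd_aboveI[of _ 1])
  fix z assume "z \<in> insert 0 ((\<lambda>W. \<bar>G m W x - G m W y\<bar>) ` Fam j)"
  then show "z \<le> 1"
  proof
    assume "z \<in> (\<lambda>W. \<bar>G m W x - G m W y\<bar>) ` Fam j"
    then obtain W where "W \<in> Fam j" "z = \<bar>G m W x - G m W y\<bar>" by blast
    with G_range[OF Fam_open[OF \<open>W \<in> Fam j\<close>] assms(1), of m]
      G_range[OF Fam_open[OF \<open>W \<in> Fam j\<close>] assms(2), of m]
    show "z \<le> 1" by linarith
  qed simp
qed

lemma dd_upper:
  assumes "x \<in> X" "y \<in> X" "W \<in> Fam j"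
  shows "\<bar>G m W x - G m W y\<bar> \<le> dd j m x y"
  unfolding dd_def by (rule cSup_upper[OF _ dd_bdd[OF assms(1,2)]]) (use assms(3) in blast)

lemma dd_nonneg:
  assumes "x \<in> X" "y \<in> X"
  shows "0 \<le> dd j m x y"
  unfolding dd_def by (rule cSup_upper[OF _ dd_bdd[OF assms(1,2)]]) blast

lemma dd_least:
  assumes "0 \<le> B" "\<And>W. W \<in> Fam j \<Longrightarrow> \<bar>G m W x - G m W y\<bar> \<le> B"
  shows "dd j m x y \<le> B"
  unfolding dd_def by (rule cSup_least) (use assms in auto)

lemma dd_le1:
  assumes "x \<in> X" "y \<in> X"
  shows "dd j m x y \<le> 1"
proof (rule dd_least)
  fix W assume "W \<in> Fam j"
  with G_range[OF Fam_open[OF \<open>W \<in> Fam j\<close>] assms(1), of m]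
    G_range[OF Fam_open[OF \<open>W \<in> Fam j\<close>] assms(2), of m]
  show "\<bar>G m W x - G m W y\<bar> \<le> 1" by linarith
qed simp

lemma dd_sym: "dd j m x y = dd j m y x"
  unfolding dd_def by (simp add: abs_minus_commute)

lemma dd_refl: "dd j m x x = 0"
proof -
  have e: "insert 0 ((\<lambda>W. \<bar>G m W x - G m W x\<bar>) ` Fam j) = {0::real}" by auto
  show ?thesis unfolding dd_def e by simp
qed

lemma dd_tri:
  assumes "x \<in> X" "y \<in> X" "z \<in> X"
  shows "dd j m x z \<le> dd j m x y + dd j m y z"
proof (rule dd_least)
  show "0 \<le> dd j m x y + dd j m y z" using dd_nonneg assms by (simp add: add_nonneg_nonneg)
  fix W assume W: "W \<in> Fam j"
  have "\<bar>G m W x - G m W z\<bar> \<le> \<bar>G m W x - G m W y\<bar> + \<bar>G m W y - G m W z\<bar>" by linarith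
  also have "\<dots> \<le> dd j m x y + dd j m y z"
    using dd_upper[OF assms(1,2) W, of m] dd_upper[OF assms(2,3) W, of m] by linarith
  finally show "\<bar>G m W x - G m W z\<bar> \<le> dd j m x y + dd j m y z" .
qed

lemma dd_cont:
  assumes "x \<in> X" "\<And>n. s n \<in> X" "(\<lambda>n. \<rho> (s n) x) \<longlonglongrightarrow> 0"
  shows "(\<lambda>n. dd j m (s n) x) \<longlonglongrightarrow> 0"
proof -
  obtain N where N: "openin T N" "x \<in> N" and fin: "finite {W \<in> Fam j. W \<inter> N \<noteq> {}}"
    using Fam_lf[of j] assms(1) unfolding locally_finite_in_def by auto
  define M where "M = {W \<in> Fam j. W \<inter> N \<noteq> {}}"
  have ev: "eventually (\<lambda>n. s n \<in> N) sequentially"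
    using limitin_T[OF assms] N unfolding limitin_def by blast
  have bound: "dd j m y x \<le> (\<Sum>W\<in>M. \<bar>G m W y - G m W x\<bar>)" if "y \<in> N" "y \<in> X" for y
  proof (rule dd_least)
    show "0 \<le> (\<Sum>W\<in>M. \<bar>G m W y - G m W x\<bar>)" by (simp add: sum_nonneg)
    fix W assume W: "W \<in> Fam j"
    show "\<bar>G m W y - G m W x\<bar> \<le> (\<Sum>W\<in>M. \<bar>G m W y - G m W x\<bar>)"
    proof (cases "W \<in> M")
      case True
      then show ?thesis using fin unfolding M_def
        by (intro member_le_sum) auto
    next
      case False
      then have "y \<notin> W" "x \<notin> W" using W that N unfolding M_def by auto
      then have "G m W y = 0" "G m W x = 0" using G(2)[OF Fam_open[OF W]] that assms(1) by auto
      then show ?thesis by (simp add: sum_nonneg)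
    qed
  qed
  have lim: "(\<lambda>n. \<Sum>W\<in>M. \<bar>G m W (s n) - G m W x\<bar>) \<longlonglongrightarrow> 0"
  proof (rule tendsto_null_sum)
    fix W assume "W \<in> M"
    then have "openin T W" unfolding M_def using Fam_open by blast
    have "(\<lambda>n. G m W (s n)) \<longlonglongrightarrow> G m W x" by (rule G_lim[OF \<open>openin T W\<close> assms])
    then have "(\<lambda>n. G m W (s n) - G m W x) \<longlonglongrightarrow> 0" by (rule LIM_zero)
    then show "(\<lambda>n. \<bar>G m W (s n) - G m W x\<bar>) \<longlonglongrightarrow> 0" by (rule tendsto_rabs_zero)
  qed
  show ?thesis
  proof (rule Lim_null_comparison[OF _ lim])
    show "\<forall>\<^sub>F n in sequentially. norm (dd j m (s n) x) \<le> (\<Sum>W\<in>M. \<bar>G m W (s n) - G m W x\<bar>)"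
      using ev
    proof eventually_elim
      case (elim n)
      then show ?case using bound[OF elim assms(2)] dd_nonneg[OF assms(2) assms(1)] by simp
    qed
  qed
qed

end

context semi
begin

definition dq :: "nat \<Rightarrow> 'a \<Rightarrow> 'a \<Rightarrow> real" where
  "dq q x y = dd (fst (prod_decode q)) (snd (prod_decode q)) x y"

definition D :: "'a \<Rightarrow> 'a \<Rightarrow> real" where
  "D x y = (\<Sum>q. dq q x y / 2 ^ q)"

lemma dq_nonneg: "x \<in> X \<Longrightarrow> y \<in> X \<Longrightarrow> 0 \<le> dq q x y"
  unfolding dq_def by (rule dd_nonneg)

lemma dq_le1: "x \<in> X \<Longrightarrow> y \<in> X \<Longrightarrow> dq q x y \<le> 1"
  unfolding dq_def by (rule dd_le1)

lemma dq_sym: "dq q x y = dq q y x"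
  unfolding dq_def by (rule dd_sym)

lemma dq_refl: "dq q x x = 0"
  unfolding dq_def by (rule dd_refl)

lemma dq_tri: "x \<in> X \<Longrightarrow> y \<in> X \<Longrightarrow> z \<in> X \<Longrightarrow> dq q x z \<le> dq q x y + dq q y z"
  unfolding dq_def by (rule dd_tri)

lemma term_bound:
  assumes "x \<in> X" "y \<in> X"
  shows "norm (dq q x y / 2 ^ q) \<le> (1/2) ^ q"
proof -
  have "norm (dq q x y / 2 ^ q) = dq q x y / 2 ^ q" using dq_nonneg[OF assms] by simp
  also have "\<dots> \<le> 1 / 2 ^ q" using dq_le1[OF assms] by (simp add: divide_right_mono)
  also have "\<dots> = (1/2) ^ q" by (simp add: power_one_over)
  finally show ?thesis .
qed

lemma summ:
  assumes "x \<in> X" "y \<in> X"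
  shows "summable (\<lambda>q. dq q x y / 2 ^ q)"
proof (rule summable_comparison_test)
  show "\<exists>N. \<forall>n\<ge>N. norm (dq n x y / 2 ^ n) \<le> (1/2) ^ n" using term_bound[OF assms] by blast
  show "summable (\<lambda>n. (1/2::real) ^ n)" by (rule summable_geometric) simp
qed

lemma D_nonneg: "x \<in> X \<Longrightarrow> y \<in> X \<Longrightarrow> 0 \<le> D x y"
  unfolding D_def by (rule suminf_nonneg[OF summ]) (simp_all add: dq_nonneg)

lemma D_refl: "D x x = 0"
  unfolding D_def dq_refl by simp

lemma D_sym: "D x y = D y x"
  unfolding D_def dq_sym[of _ x y] ..

lemma D_tri:
  assumes "x \<in> X" "y \<in> X" "z \<in> X"
  shows "D x z \<le> D x y + D y z"
proof -
  have "D x y + D y z = (\<Sum>q. dq q x y / 2 ^ q + dq q y z / 2 ^ q)"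
    unfolding D_def by (rule suminf_add[OF summ summ]) (use assms in auto)
  moreover have "D x z \<le> (\<Sum>q. dq q x y / 2 ^ q + dq q y z / 2 ^ q)"
    unfolding D_def
  proof (rule suminf_le)
    fix q
    have "dq q x z \<le> dq q x y + dq q y z" by (rule dq_tri[OF assms])
    then show "dq q x z / 2 ^ q \<le> dq q x y / 2 ^ q + dq q y z / 2 ^ q"
      by (simp add: add_divide_distrib[symmetric] divide_right_mono)
    show "summable (\<lambda>q. dq q x z / 2 ^ q)" using summ assms by simp
    show "summable (\<lambda>q. dq q x y / 2 ^ q + dq q y z / 2 ^ q)"
      by (rule summable_add[OF summ summ]) (use assms in auto)
  qed
  ultimately show ?thesis by simp
qed

lemma D_lower:
  assumes "x \<in> X" "y \<in> X"
  shows "dq q x y / 2 ^ q \<le> D x y"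
proof -
  have "sum (\<lambda>q. dq q x y / 2 ^ q) {q} \<le> D x y"
    unfolding D_def by (rule sum_le_suminf[OF summ[OF assms]]) (simp_all add: dq_nonneg assms)
  then show ?thesis by simp
qed

lemma D_sep:
  assumes xX: "x \<in> X" and "r > 0"
  shows "\<exists>q. \<forall>y\<in>X. r \<le> \<rho> x y \<longrightarrow> 1 / 2 ^ q \<le> D y x"
proof -
  obtain j W' where W': "W' \<in> Fam j" "x \<in> W'" "W' \<subseteq> Ob r x"
    using Fam_base[OF Ob(1,2)[OF xX \<open>r > 0\<close>]] by blast
  have oW': "openin T W'" using Fam_open[OF W'(1)] .
  have c1: "closedin T (X - W')" using closedin_diff[OF closedin_topspace oW'] by simp
  have "x \<in> topspace T - (X - W')" using W'(2) xX by simp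
  then obtain U0 where U0: "openin T U0" "x \<in> U0" "disjnt (X - W') (T closure_of U0)"
    using regular_T c1 unfolding regular_space by blast
  obtain m B where B: "B \<in> Fam m" "x \<in> B" "B \<subseteq> U0" using Fam_base[OF U0(1,2)] by blast
  have "T closure_of B \<subseteq> T closure_of U0" by (rule closure_of_mono[OF B(3)])
  also have "\<dots> \<subseteq> W'"
    using U0(3) closure_of_subset_topspace[of T U0] unfolding disjnt_def by auto
  finally have clB: "T closure_of B \<subseteq> W'" .
  have BX: "B \<subseteq> topspace T" using openin_subset[OF Fam_open[OF B(1)]] .
  have "x \<in> T closure_of B" using closure_of_subset[OF BX] B(2) by blast
  then have "x \<in> Fcl m W'" unfolding Fcl_def using B(1) clB by blast
  then have G1: "G m W' x = 1" by (rule G(3)[OF oW'])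
  define q where "q = prod_encode (j, m)"
  have "\<forall>y\<in>X. r \<le> \<rho> x y \<longrightarrow> 1 / 2 ^ q \<le> D y x"
  proof (intro ballI impI)
    fix y assume yX: "y \<in> X" and ry: "r \<le> \<rho> x y"
    then have "y \<notin> W'" using W'(3) Ob(3)[OF xX \<open>r > 0\<close>] by (auto simp: ball_def)
    then have "G m W' y = 0" using G(2)[OF oW'] yX by blast
    then have "1 \<le> dd j m y x" using dd_upper[OF yX xX W'(1), of m] G1 by simp
    then have "1 \<le> dq q y x" unfolding dq_def q_def by simp
    then have "1 / 2 ^ q \<le> dq q y x / 2 ^ q" by (simp add: divide_right_mono)
    also have "\<dots> \<le> D y x" by (rule D_lower[OF yX xX])
    finally show "1 / 2 ^ q \<le> D y x" .
  qed
  then show ?thesis by blast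
qed

lemma D_cont:
  assumes xX: "x \<in> X" and sX: "\<And>n. s n \<in> X" and lim: "(\<lambda>n. \<rho> (s n) x) \<longlonglongrightarrow> 0"
  shows "(\<lambda>n. D (s n) x) \<longlonglongrightarrow> 0"
  unfolding tendsto_iff
proof (intro allI impI)
  fix e :: real assume "e > 0"
  then have "e / 4 > 0" by simp
  have "\<exists>Q. (1/2::real) ^ Q < e / 4" by (rule real_arch_pow_inv[OF \<open>e / 4 > 0\<close>]) simp
  then obtain Q where Q: "(1/2::real) ^ Q < e / 4" ..
  define f where "f n q = dq q (s n) x / 2 ^ q" for n q
  have fin: "(\<lambda>n. \<Sum>q<Q. f n q) \<longlonglongrightarrow> 0"
  proof (rule tendsto_null_sum)
    fix q assume "q \<in> {..<Q}"
    have "(\<lambda>n. dq q (s n) x) \<longlonglongrightarrow> 0"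
      unfolding dq_def by (rule dd_cont[OF xX sX lim])
    then show "(\<lambda>n. f n q) \<longlonglongrightarrow> 0" unfolding f_def by (rule tendsto_divide_zero)
  qed
  then have ev: "eventually (\<lambda>n. (\<Sum>q<Q. f n q) < e / 2) sequentially"
    using order_tendstoD(2)[OF fin, of "e/2"] \<open>e > 0\<close> by simp
  have gs: "summable (\<lambda>q. (1/2::real) ^ Q * (1/2) ^ q)"
    by (rule summable_mult, rule summable_geometric) simp
  have gv: "(\<Sum>q. (1/2::real) ^ Q * (1/2) ^ q) = (1/2) ^ Q * 2"
    by (subst suminf_mult, rule summable_geometric) (simp_all add: suminf_geometric)
  have tail: "(\<Sum>q. f n (q + Q)) \<le> (1/2) ^ Q * 2" for n
  proof -
    have sf: "summable (f n)" unfolding f_def by (rule summ[OF sX xX])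
    have "(\<Sum>q. f n (q + Q)) \<le> (\<Sum>q. (1/2::real) ^ Q * (1/2) ^ q)"
    proof (rule suminf_le)
      fix q
      have "f n (q + Q) \<le> (1/2) ^ (q + Q)"
        using term_bound[OF sX xX, of "q + Q" n] dq_nonneg[OF sX xX, of "q + Q" n]
        unfolding f_def by simp
      then show "f n (q + Q) \<le> (1/2::real) ^ Q * (1/2) ^ q" by (simp add: power_add mult.commute)
      show "summable (\<lambda>q. f n (q + Q))" by (rule summable_ignore_initial_segment[OF sf])
    qed (rule gs)
    then show ?thesis using gv by simp
  qed
  show "eventually (\<lambda>n. dist (D (s n) x) 0 < e) sequentially"
    using ev
  proof eventually_elim
    case (elim n)
    have sf: "summable (f n)" unfolding f_def by (rule summ[OF sX xX])
    have "D (s n) x = (\<Sum>q. f n (q + Q)) + (\<Sum>q<Q. f n q)"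
      unfolding D_def f_def[symmetric] by (rule suminf_split_initial_segment[OF sf])
    then have "D (s n) x < e" using tail[of n] elim Q by linarith
    then show ?case using D_nonneg[OF sX xX] by simp
  qed
qed

end

theorem mainTheorem9:
  fixes X :: "'a set" and \<rho> :: "'a \<Rightarrow> 'a \<Rightarrow> real"
  assumes nonempty: "X \<noteq> {}"
    and nonneg: "\<forall>x\<in>X. \<forall>y\<in>X. \<rho> x y \<ge> 0"
    and I: "\<forall>x\<in>X. \<forall>y\<in>X. \<rho> x y = 0 \<longleftrightarrow> x = y"
    and II: "\<forall>x\<in>X. \<forall>y\<in>X. \<rho> x y = \<rho> y x"
    and VI: "\<forall>a\<in>X. \<forall>\<epsilon>>0. \<exists>\<phi>>0. \<forall>b\<in>X. \<forall>c\<in>X.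
               \<rho> a b < \<phi> \<and> \<rho> c b < \<phi> \<longrightarrow> \<rho> a c < \<epsilon>"
  shows "\<exists>d. is_metric_on X d \<and>
           (\<forall>x s. x \<in> X \<and> (\<forall>n. s n \<in> X) \<longrightarrow>
              ((\<lambda>n. \<rho> (s n) x) \<longlonglongrightarrow> 0) = ((\<lambda>n. d (s n) x) \<longlonglongrightarrow> 0))"
proof -
  interpret S: semi X \<rho>
  proof
    show "\<And>x y. x \<in> X \<Longrightarrow> y \<in> X \<Longrightarrow> 0 \<le> \<rho> x y" using nonneg by blast
    show "\<And>x y. x \<in> X \<Longrightarrow> y \<in> X \<Longrightarrow> (\<rho> x y = 0) = (x = y)" using I by blast
    show "\<And>x y. x \<in> X \<Longrightarrow> y \<in> X \<Longrightarrow> \<rho> x y = \<rho> y x" using II by blast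
    show "\<And>a \<epsilon>. a \<in> X \<Longrightarrow> 0 < \<epsilon> \<Longrightarrow> \<exists>\<phi>>0. \<forall>b\<in>X. \<forall>c\<in>X. \<rho> a b < \<phi> \<and> \<rho> c b < \<phi> \<longrightarrow> \<rho> a c < \<epsilon>"
      using VI by blast
  qed
  have met: "is_metric_on X S.D"
    unfolding is_metric_on_def
  proof (intro conjI ballI)
    fix x y assume xX: "x \<in> X" and yX: "y \<in> X"
    show "0 \<le> S.D x y" by (rule S.D_nonneg[OF xX yX])
    show "S.D x y = S.D y x" by (rule S.D_sym)
    show "(S.D x y = 0) = (x = y)"
    proof
      assume D0: "S.D x y = 0"
      show "x = y"
      proof (rule ccontr)
        assume "x \<noteq> y"
        then have rpos: "\<rho> x y > 0" using nonneg I xX yX by (metis order_le_less)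
        obtain q where q: "\<forall>y'\<in>X. \<rho> x y \<le> \<rho> x y' \<longrightarrow> 1 / 2 ^ q \<le> S.D y' x"
          using S.D_sep[OF xX rpos] by blast
        have "1 / 2 ^ q \<le> S.D y x" using q yX by blast
        then have "0 < S.D y x" by (rule less_le_trans[rotated]) simp
        then show False using D0 S.D_sym[of x y] by simp
      qed
    next
      assume "x = y"
      then show "S.D x y = 0" by (simp add: S.D_refl)
    qed
  next
    fix x y z assume "x \<in> X" "y \<in> X" "z \<in> X"
    then show "S.D x z \<le> S.D x y + S.D y z" by (rule S.D_tri)
  qed
  have conv: "((\<lambda>n. \<rho> (s n) x) \<longlonglongrightarrow> 0) = ((\<lambda>n. S.D (s n) x) \<longlonglongrightarrow> 0)"
    if xX: "x \<in> X" and sX: "\<And>n. s n \<in> X" for x s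
  proof
    assume "(\<lambda>n. \<rho> (s n) x) \<longlonglongrightarrow> 0"
    then show "(\<lambda>n. S.D (s n) x) \<longlonglongrightarrow> 0" by (rule S.D_cont[OF xX sX])
  next
    assume Dlim: "(\<lambda>n. S.D (s n) x) \<longlonglongrightarrow> 0"
    show "(\<lambda>n. \<rho> (s n) x) \<longlonglongrightarrow> 0"
      unfolding tendsto_iff
    proof (intro allI impI)
      fix e :: real assume "e > 0"
      obtain q where q: "\<forall>y\<in>X. e \<le> \<rho> x y \<longrightarrow> 1 / 2 ^ q \<le> S.D y x"
        using S.D_sep[OF xX \<open>e > 0\<close>] by blast
      have "eventually (\<lambda>n. S.D (s n) x < 1 / 2 ^ q) sequentially"
        using order_tendstoD(2)[OF Dlim, of "1 / 2 ^ q"] by simp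
      then show "eventually (\<lambda>n. dist (\<rho> (s n) x) 0 < e) sequentially"
      proof eventually_elim
        case (elim n)
        have "\<not> e \<le> \<rho> x (s n)" using q sX[of n] elim by force
        then have "\<rho> x (s n) < e" by simp
        moreover have "\<rho> (s n) x = \<rho> x (s n)" using II xX sX[of n] by blast
        moreover have "0 \<le> \<rho> (s n) x" using nonneg xX sX[of n] by blast
        ultimately show ?case by simp
      qed
    qed
  qed
  show ?thesis
    using met conv by blast
qed

end
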